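(* Let $A\in\mathbb{R}^{n\times n}$ be Metzler, $J\in\mathbb{R}^{n\times n}$ nonnegative, $\bar T>0$, $d_s\in\mathbb{N}$, $\varepsilon>0$ and $\epsilon>0$. Assume there exist polynomial vectors $\zeta,\gamma:\mathbb{R}\to\mathbb{R}^n$ of degree at most $2d_s$ such that: (i) $\gamma$ is CSOS; (ii) $\zeta(\bar T)-\epsilon\mathbf{1}_n\ge0$; (iii) $-\zeta(\tau)^\top A+\dot\zeta(\tau)^\top-\tau(\bar T-\tau)\gamma(\tau)^\top$ is CSOS (as a polynomial row vector in $\tau$); (iv) $-\zeta(\bar T)^\top J+\zeta(0)^\top-\varepsilon\mathbf{1}_n^\top\ge0$. Then $\zeta(\bar T)\in\mathbb{R}^n_{>0}$, $\zeta(\tau)^\top A-\dot\zeta(\tau)^\top\le0$ for all $\tau\in[0,\bar T]$, $\zeta(\bar T)^\top J-\zeta(0)^\top+\varepsilon\mathbf{1}_n^\top\le0$, and the impulsive system $\dot x=Ax$ ($t\ne t_k$), $x(t_k^+)=Jx(t_k)$ is asymptotically stable under constant dwell-time $\bar T$ (i.e. $t_{k+1}-t_k=\bar T$ for all $k$).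
   Context: A univariate polynomial is a sum of squares (SOS) if it equals $\sum_i q_i(\tau)^2$ for some real polynomials $q_i$; a polynomial vector is componentwise SOS (CSOS) if each component is SOS. A matrix is Metzler if its off-diagonal entries are nonnegative and nonnegative if all its entries are. Vector inequalities are componentwise; $\mathbf{1}_n$ is the vector of ones. In the impulsive system $x(t^+)=\lim_{s\downarrow t}x(s)$, and asymptotic stability means global asymptotic stability of the zero solution. *)

theory Defs
  imports "HOL-Analysis.Analysis" "HOL-Computational_Algebra.Polynomial"
begin

text \<open>A univariate real polynomial is a sum of squares.\<close>
definition sos_poly :: "real poly \<Rightarrow> bool" where
  "sos_poly p \<longleftrightarrow> (\<exists>qs :: real poly list. p = (\<Sum>q\<leftarrow>qs. q ^ 2))"

text \<open>Componentwise SOS polynomial vector.\<close>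
definition csos :: "real poly ^ 'n \<Rightarrow> bool" where
  "csos v \<longleftrightarrow> (\<forall>i. sos_poly (v $ i))"

definition metzler :: "real ^ 'n ^ 'n \<Rightarrow> bool" where
  "metzler A \<longleftrightarrow> (\<forall>i j. i \<noteq> j \<longrightarrow> 0 \<le> A $ i $ j)"

definition nonneg_mat :: "real ^ 'n ^ 'n \<Rightarrow> bool" where
  "nonneg_mat J \<longleftrightarrow> (\<forall>i j. 0 \<le> J $ i $ j)"

text \<open>Solution (for t \<ge> 0) of the impulsive system
  dx/dt = A x (t \<noteq> t_k), x(t_k^+) = J x(t_k), with impulse times t_k = k T, k \<ge> 1,
  and initial state x(0). On each interval (kT,(k+1)T] the solution coincides with a
  classical solution y of dy/dt = A y on [kT,(k+1)T] started at y(kT) = x(kT^+), where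
  x(0^+) = x(0) and x(kT^+) = J x(kT) for k \<ge> 1.\<close>
definition impulsive_solution ::
  "real ^ 'n ^ 'n \<Rightarrow> real ^ 'n ^ 'n \<Rightarrow> real \<Rightarrow> (real \<Rightarrow> real ^ 'n) \<Rightarrow> bool" where
  "impulsive_solution A J T x \<longleftrightarrow>
     (\<forall>k::nat. \<exists>y :: real \<Rightarrow> real ^ 'n.
        (\<forall>t\<in>{real k * T .. real (Suc k) * T}.
            (y has_vector_derivative (A *v y t)) (at t within {real k * T .. real (Suc k) * T}))
      \<and> y (real k * T) = (if k = 0 then x 0 else J *v x (real k * T))
      \<and> (\<forall>t\<in>{real k * T <.. real (Suc k) * T}. x t = y t))"

text \<open>Global asymptotic stability of the zero solution under constant dwell time T.\<close>
definition impulsive_GAS :: "real ^ 'n ^ 'n \<Rightarrow> real ^ 'n ^ 'n \<Rightarrow> real \<Rightarrow> bool" where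
  "impulsive_GAS A J T \<longleftrightarrow>
     (\<forall>e>0. \<exists>d>0. \<forall>x. impulsive_solution A J T x \<and> norm (x 0) < d \<longrightarrow>
          (\<forall>t\<ge>0. norm (x t) < e))
   \<and> (\<forall>x. impulsive_solution A J T x \<longrightarrow> (x \<longlongrightarrow> 0) at_top)"

end

theory Submission
  imports Defs
begin


definition Bp :: "real^'n^'n \<Rightarrow> nat \<Rightarrow> real^'n \<Rightarrow> real^'n" where
  "Bp B k x = ((\<lambda>v. B *v v) ^^ k) x"

definition ee :: "real^'n^'n \<Rightarrow> 'n \<Rightarrow> real \<Rightarrow> real^'n \<Rightarrow> real" where
  "ee B i t x = (\<Sum>n. (Bp B n x $ i / fact n) * t ^ n)"

lemma Bp_0[simp]: "Bp B 0 x = x" by (simp add: Bp_def)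
lemma Bp_Suc: "Bp B (Suc n) x = B *v Bp B n x" by (simp add: Bp_def)

lemma Bp_diff: "Bp B n (x - y) = Bp B n x - Bp B n y"
  by (induction n) (simp_all add: Bp_Suc matrix_vector_mult_diff_distrib)

lemma mat_bound: "\<exists>K>0. \<forall>x. norm (B *v x) \<le> K * norm (x::real^'n)"
proof -
  obtain K where "K > 0" "\<forall>x. norm (B *v x) \<le> norm (x::real^'n) * K"
    using bounded_linear.pos_bounded[OF matrix_vector_mul_bounded_linear[of B]] by blast
  thus ?thesis by (metis mult.commute)
qed

lemma Bp_bound:
  assumes K: "K > 0" "\<forall>x. norm (B *v x) \<le> K * norm (x::real^'n)"
  shows "norm (Bp B n x) \<le> K ^ n * norm x"
proof (induction n)
  case 0 then show ?case by simp
next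
  case (Suc n)
  have "norm (Bp B (Suc n) x) \<le> K * norm (Bp B n x)" using K by (simp add: Bp_Suc)
  also have "\<dots> \<le> K * (K ^ n * norm x)" using Suc K by (intro mult_left_mono) auto
  finally show ?case by simp
qed

lemma summable_expK: "summable (\<lambda>n. (a::real) ^ n / fact n)"
  using summable_exp[of a] by (simp add: divide_inverse mult.commute)

lemma coef_bound:
  assumes K: "K > 0" "\<forall>x. norm (B *v x) \<le> K * norm (x::real^'n)"
  shows "norm (Bp B n x $ i / fact n * t ^ n) \<le> norm x * ((K * \<bar>t\<bar>) ^ n / fact n)"
proof -
  have "\<bar>Bp B n x $ i\<bar> \<le> K ^ n * norm x"
    using component_le_norm_cart Bp_bound[OF K] order_trans by blast
  hence "\<bar>Bp B n x $ i\<bar> * \<bar>t\<bar> ^ n \<le> K ^ n * norm x * \<bar>t\<bar> ^ n"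
    by (intro mult_right_mono) auto
  thus ?thesis
    by (simp add: abs_mult power_abs divide_simps power_mult_distrib mult_ac)
qed

lemma summable_coef:
  fixes B :: "real^'n^'n"
  shows "summable (\<lambda>n. Bp B n x $ i / fact n * t ^ n)"
proof -
  obtain K where K: "K > 0" "\<forall>v. norm (B *v v) \<le> K * norm (v::real^'n)"
    using mat_bound by blast
  show ?thesis
    apply (rule summable_comparison_test[where g="\<lambda>n. norm x * ((K * \<bar>t\<bar>) ^ n / fact n)"])
    using coef_bound[OF K] summable_mult[OF summable_expK] by blast+
qed

lemma ee_deriv:
  "((\<lambda>t. ee B i t x) has_real_derivative (\<Sum>l\<in>UNIV. B $ i $ l * ee B l t x)) (at t)"
proof -
  define c where "c = (\<lambda>n. Bp B n x $ i / fact n)"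
  have "((\<lambda>t. \<Sum>n. c n * t ^ n) has_field_derivative (\<Sum>n. diffs c n * t ^ n)) (at t)"
    by (rule termdiffs_strong_converges_everywhere) (unfold c_def, rule summable_coef)
  moreover have "diffs c n * t ^ n = (\<Sum>l\<in>UNIV. B $ i $ l * (Bp B n x $ l / fact n * t ^ n))" for n
  proof -
    have "diffs c n = Bp B (Suc n) x $ i / fact n"
      by (simp add: diffs_def c_def del: of_nat_Suc)
    thus ?thesis
      by (simp add: Bp_Suc matrix_vector_mult_def sum_distrib_right sum_distrib_left sum_divide_distrib mult_ac)
  qed
  moreover have "(\<Sum>n. \<Sum>l\<in>UNIV. B $ i $ l * (Bp B n x $ l / fact n * t ^ n))
      = (\<Sum>l\<in>UNIV. B $ i $ l * ee B l t x)"
  proof -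
    have m: "(\<Sum>n. B $ i $ l * (Bp B n x $ l / fact n * t ^ n)) = B $ i $ l * ee B l t x" for l
      unfolding ee_def by (rule suminf_mult[OF summable_coef])
    have s: "summable (\<lambda>n. B $ i $ l * (Bp B n x $ l / fact n * t ^ n))" for l
      by (rule summable_mult[OF summable_coef])
    show ?thesis by (simp only: suminf_sum[OF s] m)
  qed
  ultimately show ?thesis by (simp add: ee_def c_def)
qed

lemma ee_zero: "ee B i 0 x = x $ i"
  unfolding ee_def using powser_zero[of "\<lambda>n. Bp B n x $ i / fact n"] by simp

lemma ee_diff: "ee B i t (x - y) = ee B i t x - ee B i t y"
proof -
  have "(\<lambda>n. (Bp B n x - Bp B n y) $ i / fact n * t ^ n) =
     (\<lambda>n. Bp B n x $ i / fact n * t ^ n - Bp B n y $ i / fact n * t ^ n)"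
    by (simp add: left_diff_distrib diff_divide_distrib)
  thus ?thesis unfolding ee_def Bp_diff
    using suminf_diff[OF summable_coef[of B x i t] summable_coef[of B y i t]] by simp
qed

lemma Bp_nonneg:
  assumes "\<forall>i j. 0 \<le> B $ i $ j" "\<forall>i. 0 \<le> x $ i"
  shows "0 \<le> Bp B n x $ i"
  using assms by (induction n arbitrary: i) (auto simp: Bp_Suc matrix_vector_mult_def intro!: sum_nonneg)

lemma ee_nonneg:
  assumes "\<forall>i j. 0 \<le> B $ i $ j" "\<forall>i. 0 \<le> x $ i" "t \<ge> 0"
  shows "0 \<le> ee B i t x"
  unfolding ee_def
  by (rule suminf_nonneg[OF summable_coef]) (use Bp_nonneg[OF assms(1,2)] assms(3) in auto)

lemma ee_bound:
  fixes B :: "real^'n^'n"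
  shows "\<exists>K>0. \<forall>i t x. \<bar>ee B i t x\<bar> \<le> norm x * exp (K * \<bar>t\<bar>)"
proof -
  obtain K where K: "K > 0" "\<forall>v. norm (B *v v) \<le> K * norm (v::real^'n)"
    using mat_bound by blast
  have "\<bar>ee B i t x\<bar> \<le> norm x * exp (K * \<bar>t\<bar>)" for i t x
  proof -
    have s: "summable (\<lambda>n. norm x * ((K * \<bar>t\<bar>) ^ n / fact n))"
      using summable_mult[OF summable_expK] by blast
    have "\<bar>ee B i t x\<bar> \<le> (\<Sum>n. \<bar>Bp B n x $ i / fact n * t ^ n\<bar>)"
      unfolding ee_def by (rule summable_rabs[OF summable_norm_cancel]) 
        (rule summable_comparison_test[OF _ s], use coef_bound[OF K] in auto)
    also have "\<dots> \<le> (\<Sum>n. norm x * ((K * \<bar>t\<bar>) ^ n / fact n))"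
      by (rule suminf_le[OF _ summable_norm_cancel s])
        (use coef_bound[OF K] in auto, rule summable_comparison_test[OF _ s], use coef_bound[OF K] in auto)
    also have "\<dots> = norm x * exp (K * \<bar>t\<bar>)"
      using exp_converges[of "K * \<bar>t\<bar>"] summable_expK
      by (subst suminf_mult) (auto simp: sums_iff divide_inverse mult.commute)
    finally show ?thesis .
  qed
  thus ?thesis using K by blast
qed



definition Bsh :: "real^'n^'n \<Rightarrow> real \<Rightarrow> real^'n^'n" where
  "Bsh A c = (\<chi> i j. A $ i $ j + (if i = j then c else 0))"

definition psi :: "real^'n^'n \<Rightarrow> real \<Rightarrow> real \<Rightarrow> real^'n \<Rightarrow> real^'n" where
  "psi A c t x = (\<chi> i. exp (- c * t) * ee (Bsh A c) i t x)"

lemma psi_deriv: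
  "((\<lambda>t. psi A c t x $ i) has_real_derivative (A *v psi A c t x) $ i) (at t)"
proof -
  let ?B = "Bsh A c"
  have e: "((\<lambda>t. exp (- c * t)) has_real_derivative (exp (- c * t) * (- c))) (at t)"
    by (auto intro!: derivative_eq_intros)
  have "((\<lambda>t. exp (- c * t) * ee ?B i t x) has_real_derivative
      (exp (- c * t) * (- c)) * ee ?B i t x + (\<Sum>l\<in>UNIV. ?B $ i $ l * ee ?B l t x) * exp (- c * t)) (at t)"
    by (rule DERIV_mult[OF e ee_deriv])
  moreover have "(\<Sum>l\<in>UNIV. ?B $ i $ l * ee ?B l t x) = (\<Sum>l\<in>UNIV. A $ i $ l * ee ?B l t x) + c * ee ?B i t x"
  proof -
    have "?B $ i $ l * ee ?B l t x = A $ i $ l * ee ?B l t x + (if l = i then c * ee ?B l t x else 0)" for l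
      by (auto simp: Bsh_def distrib_right)
    hence "(\<Sum>l\<in>UNIV. ?B $ i $ l * ee ?B l t x) = (\<Sum>l\<in>UNIV. A $ i $ l * ee ?B l t x)
        + (\<Sum>l\<in>UNIV. (if l = i then c * ee ?B l t x else 0))"
      by (simp add: sum.distrib)
    thus ?thesis by simp
  qed
  moreover have "(A *v psi A c t x) $ i = exp (- c * t) * (\<Sum>l\<in>UNIV. A $ i $ l * ee ?B l t x)"
    by (simp add: matrix_vector_mult_def psi_def sum_distrib_left mult_ac)
  ultimately show ?thesis
    by (simp add: psi_def algebra_simps)
qed

lemma psi_zero[simp]: "psi A c 0 x = x"
  by (simp add: psi_def ee_zero vec_eq_iff)

lemma psi_diff: "psi A c t (x - y) = psi A c t x - psi A c t y"
  by (simp add: psi_def ee_diff vec_eq_iff algebra_simps)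

lemma nonincr_within:
  fixes f :: "real \<Rightarrow> real"
  assumes "a \<le> b" "\<And>t. t \<in> {a..b} \<Longrightarrow> (f has_real_derivative f' t) (at t within {a..b})"
    "\<And>t. t \<in> {a..b} \<Longrightarrow> f' t \<le> 0"
  shows "f b \<le> f a"
proof (rule DERIV_nonpos_imp_decreasing_open[OF assms(1)])
  fix x assume x: "a < x" "x < b"
  then show "\<exists>y. (f has_real_derivative y) (at x) \<and> y \<le> 0"
    using assms(2,3)[of x] at_within_Icc_at[OF x] by auto
next
  show "continuous_on {a..b} f" by (rule DERIV_continuous_on[OF assms(2)])
qed

lemma nonincr_within':
  fixes f :: "real \<Rightarrow> real"
  assumes "\<And>t. t \<in> {a..b} \<Longrightarrow> (f has_real_derivative f' t) (at t within {a..b})"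
    "\<And>t. t \<in> {a..b} \<Longrightarrow> f' t \<le> 0" "t \<in> {a..b}"
  shows "f t \<le> f a"
proof (rule nonincr_within[of a t f f'])
  show "a \<le> t" using assms(3) by auto
  fix s assume s: "s \<in> {a..t}"
  hence "s \<in> {a..b}" using assms(3) by auto
  thus "(f has_real_derivative f' s) (at s within {a..t})"
    using assms(1) DERIV_subset assms(3) by fastforce
  show "f' s \<le> 0" using assms(2) \<open>s \<in> {a..b}\<close> by auto
qed

lemma quad_bound:
  fixes A :: "real^'n^'n" and d :: "'n \<Rightarrow> real"
  shows "(\<Sum>i\<in>UNIV. d i * (\<Sum>j\<in>UNIV. A $ i $ j * d j))
      \<le> (\<Sum>i\<in>UNIV. \<Sum>j\<in>UNIV. \<bar>A $ i $ j\<bar>) * (\<Sum>k\<in>UNIV. (d k)\<^sup>2)"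
proof -
  let ?S = "\<Sum>k\<in>UNIV. (d k)\<^sup>2"
  have sq: "(d k)\<^sup>2 \<le> ?S" for k by (rule member_le_sum) auto
  have t: "d i * (A $ i $ j * d j) \<le> \<bar>A $ i $ j\<bar> * ?S" for i j
  proof -
    have "d i * (A $ i $ j * d j) \<le> \<bar>A $ i $ j\<bar> * (\<bar>d i\<bar> * \<bar>d j\<bar>)"
      by (simp add: abs_mult mult_ac abs_le_iff[symmetric] )
         (metis abs_ge_self abs_mult mult.assoc mult.left_commute)
    also have "\<bar>d i\<bar> * \<bar>d j\<bar> \<le> ?S"
    proof -
      have "2 * (\<bar>d i\<bar> * \<bar>d j\<bar>) \<le> (d i)\<^sup>2 + (d j)\<^sup>2"
        using sum_squares_bound[of "\<bar>d i\<bar>" "\<bar>d j\<bar>"] by (simp add: power2_eq_square)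
      thus ?thesis using sq[of i] sq[of j] by linarith
    qed
    hence "\<bar>A $ i $ j\<bar> * (\<bar>d i\<bar> * \<bar>d j\<bar>) \<le> \<bar>A $ i $ j\<bar> * ?S" by (intro mult_left_mono) auto
    finally show ?thesis .
  qed
  have "(\<Sum>i\<in>UNIV. d i * (\<Sum>j\<in>UNIV. A $ i $ j * d j)) = (\<Sum>i\<in>UNIV. \<Sum>j\<in>UNIV. d i * (A $ i $ j * d j))"
    by (simp add: sum_distrib_left)
  also have "\<dots> \<le> (\<Sum>i\<in>UNIV. \<Sum>j\<in>UNIV. \<bar>A $ i $ j\<bar> * ?S)"
    by (intro sum_mono t)
  also have "\<dots> = (\<Sum>i\<in>UNIV. \<Sum>j\<in>UNIV. \<bar>A $ i $ j\<bar>) * ?S"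
    by (simp add: sum_distrib_right)
  finally show ?thesis .
qed

lemma ode_unique:
  fixes A :: "real^'n^'n" and y :: "real \<Rightarrow> real^'n"
  assumes "\<forall>t\<in>{a..b}. (y has_vector_derivative (A *v y t)) (at t within {a..b})"
    and t: "t \<in> {a..b}"
  shows "y t = psi A c (t - a) (y a)"
proof -
  define d where "d s i = y s $ i - psi A c (s - a) (y a) $ i" for s i
  define L where "L = (\<Sum>i\<in>UNIV. \<Sum>j\<in>UNIV. \<bar>A $ i $ j\<bar>)"
  define g where "g s = exp (- 2 * L * s) * (\<Sum>i\<in>UNIV. (d s i)\<^sup>2)" for s
  have dd: "((\<lambda>s. d s i) has_real_derivative (\<Sum>j\<in>UNIV. A $ i $ j * d s j)) (at s within {a..b})"
    if s: "s \<in> {a..b}" for s i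
  proof -
    have "((\<lambda>s. y s $ i) has_vector_derivative (A *v y s) $ i) (at s within {a..b})"
      using bounded_linear.has_vector_derivative[OF bounded_linear_vec_nth] assms(1) s by blast
    hence y1: "((\<lambda>s. y s $ i) has_real_derivative (A *v y s) $ i) (at s within {a..b})"
      by (simp add: has_real_derivative_iff_has_vector_derivative)
    have p1: "((\<lambda>s. psi A c (s - a) (y a) $ i) has_real_derivative (A *v psi A c (s - a) (y a)) $ i)
        (at s within {a..b})"
    proof -
      have "((\<lambda>s. s - a) has_real_derivative 1) (at s within {a..b})"
        by (auto intro!: derivative_eq_intros)
      from DERIV_chain2[OF psi_deriv[of A c "y a" i "s - a"] this] show ?thesis by simp
    qed
    have "(A *v y s) $ i - (A *v psi A c (s - a) (y a)) $ i = (\<Sum>j\<in>UNIV. A $ i $ j * d s j)"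
      by (simp add: matrix_vector_mult_def d_def sum_subtractf right_diff_distrib)
    thus ?thesis using DERIV_diff[OF y1 p1] unfolding d_def by simp
  qed
  have gd: "(g has_real_derivative
      (exp (- 2 * L * s) * (\<Sum>i\<in>UNIV. 2 * d s i * (\<Sum>j\<in>UNIV. A $ i $ j * d s j))
       + exp (- 2 * L * s) * (- 2 * L) * (\<Sum>i\<in>UNIV. (d s i)\<^sup>2))) (at s within {a..b})"
    if s: "s \<in> {a..b}" for s
    unfolding g_def
    by (rule derivative_eq_intros DERIV_sum dd[OF s] refl | simp add: mult_ac)+
  have "g t \<le> g a"
  proof (rule nonincr_within'[OF gd _ t])
    fix s assume "s \<in> {a..b}"
    have "(\<Sum>i\<in>UNIV. 2 * d s i * (\<Sum>j\<in>UNIV. A $ i $ j * d s j))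
        = 2 * (\<Sum>i\<in>UNIV. d s i * (\<Sum>j\<in>UNIV. A $ i $ j * d s j))"
      by (simp add: sum_distrib_left mult_ac)
    also have "\<dots> \<le> 2 * (L * (\<Sum>i\<in>UNIV. (d s i)\<^sup>2))"
      using quad_bound[of "d s" A] unfolding L_def by simp
    finally have "exp (- 2 * L * s) * (\<Sum>i\<in>UNIV. 2 * d s i * (\<Sum>j\<in>UNIV. A $ i $ j * d s j))
        \<le> exp (- 2 * L * s) * (2 * (L * (\<Sum>i\<in>UNIV. (d s i)\<^sup>2)))"
      by (intro mult_left_mono) auto
    thus "exp (- 2 * L * s) * (\<Sum>i\<in>UNIV. 2 * d s i * (\<Sum>j\<in>UNIV. A $ i $ j * d s j))
       + exp (- 2 * L * s) * (- 2 * L) * (\<Sum>i\<in>UNIV. (d s i)\<^sup>2) \<le> 0"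
      by (simp add: algebra_simps)
  qed
  moreover have "g a = 0" by (simp add: g_def d_def)
  ultimately have "(\<Sum>i\<in>UNIV. (d t i)\<^sup>2) \<le> 0"
    by (simp add: g_def mult_le_0_iff)
  hence "\<forall>i\<in>UNIV. (d t i)\<^sup>2 = 0"
    using sum_nonneg_eq_0_iff[of UNIV "\<lambda>i. (d t i)\<^sup>2"]
    by (metis (no_types, lifting) dual_order.antisym finite_class.finite_UNIV sum_nonneg zero_le_power2)
  thus ?thesis by (simp add: d_def vec_eq_iff)
qed



lemma Bsh_nonneg:
  assumes "metzler A"
  shows "\<forall>i j. 0 \<le> Bsh A (\<Sum>k\<in>UNIV. \<bar>A $ k $ k\<bar>) $ i $ j"
proof (intro allI)
  fix i j
  have "\<bar>A $ i $ i\<bar> \<le> (\<Sum>k\<in>UNIV. \<bar>A $ k $ k\<bar>)" by (rule member_le_sum) auto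
  thus "0 \<le> Bsh A (\<Sum>k\<in>UNIV. \<bar>A $ k $ k\<bar>) $ i $ j"
    using assms unfolding metzler_def Bsh_def by (auto simp: abs_le_iff)
qed

lemma psi_nonneg:
  assumes "\<forall>i j. 0 \<le> Bsh A c $ i $ j" "\<forall>i. 0 \<le> z $ i" "t \<ge> 0"
  shows "0 \<le> psi A c t z $ i"
  using ee_nonneg[OF assms] by (simp add: psi_def)

lemma psi_bound:
  fixes A :: "real^'n^'n"
  assumes "T \<ge> 0"
  shows "\<exists>C>0. \<forall>t\<in>{0..T}. \<forall>x. norm (psi A c t x) \<le> C * norm x"
proof -
  obtain K where K: "K > 0" "\<forall>i t x. \<bar>ee (Bsh A c) i t x\<bar> \<le> norm x * exp (K * \<bar>t\<bar>)"
    using ee_bound by blast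
  define C where "C = real CARD('n) * (exp (\<bar>c\<bar> * T) * exp (K * T))"
  have "C > 0" by (simp add: C_def)
  moreover have "norm (psi A c t x) \<le> C * norm x" if t: "t \<in> {0..T}" for t x
  proof -
    have comp: "\<bar>psi A c t x $ i\<bar> \<le> exp (\<bar>c\<bar> * T) * exp (K * T) * norm x" for i
    proof -
      have "\<bar>psi A c t x $ i\<bar> = exp (- c * t) * \<bar>ee (Bsh A c) i t x\<bar>"
        by (simp add: psi_def abs_mult)
      also have "\<dots> \<le> exp (\<bar>c\<bar> * T) * (norm x * exp (K * T))"
      proof (rule mult_mono)
        show "exp (- c * t) \<le> exp (\<bar>c\<bar> * T)"
        proof -
          have "(- c) * t \<le> \<bar>c\<bar> * t" using t by (intro mult_right_mono) auto
          also have "\<dots> \<le> \<bar>c\<bar> * T" using t by (intro mult_left_mono) auto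
          finally show ?thesis by simp
        qed
        have "\<bar>ee (Bsh A c) i t x\<bar> \<le> norm x * exp (K * \<bar>t\<bar>)" using K by blast
        also have "\<dots> \<le> norm x * exp (K * T)" using t K by (intro mult_left_mono) auto
        finally show "\<bar>ee (Bsh A c) i t x\<bar> \<le> norm x * exp (K * T)" .
      qed auto
      finally show ?thesis by (simp add: mult_ac)
    qed
    have "norm (psi A c t x) \<le> (\<Sum>i\<in>UNIV. \<bar>psi A c t x $ i\<bar>)" by (rule norm_le_l1_cart)
    also have "\<dots> \<le> (\<Sum>i\<in>(UNIV::'n set). exp (\<bar>c\<bar> * T) * exp (K * T) * norm x)"
      by (intro sum_mono comp)
    also have "\<dots> = C * norm x" by (simp add: C_def)
    finally show ?thesis .
  qed
  ultimately show ?thesis by blast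
qed

lemma sol_struct:
  assumes sol: "impulsive_solution A J T x" and T: "T > 0"
  shows "\<forall>t\<in>{real k * T <.. real (Suc k) * T}.
           x t = psi A c (t - real k * T) (((\<lambda>v. J *v psi A c T v) ^^ k) (x 0))"
proof -
  define p where "p k = (if k = 0 then x 0 else J *v x (real k * T))" for k
  have step: "(\<forall>t\<in>{real k * T <.. real (Suc k) * T}. x t = psi A c (t - real k * T) (p k))
      \<and> p (Suc k) = J *v psi A c T (p k)" for k
  proof -
    obtain y where y1: "\<forall>t\<in>{real k * T .. real (Suc k) * T}.
            (y has_vector_derivative (A *v y t)) (at t within {real k * T .. real (Suc k) * T})"
      and y2: "y (real k * T) = p k"
      and y3: "\<forall>t\<in>{real k * T <.. real (Suc k) * T}. x t = y t"
      using sol unfolding impulsive_solution_def p_def by blast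
    have u: "y t = psi A c (t - real k * T) (p k)" if "t \<in> {real k * T .. real (Suc k) * T}" for t
      using ode_unique[OF y1 that, of c] y2 by simp
    have 1: "\<forall>t\<in>{real k * T <.. real (Suc k) * T}. x t = psi A c (t - real k * T) (p k)"
      using u y3 by auto
    have e: "real (Suc k) * T - real k * T = T" by (simp add: algebra_simps)
    have "real k * T < real (Suc k) * T" using T by (auto simp: algebra_simps)
    hence "x (real (Suc k) * T) = psi A c T (p k)" using 1 e by auto
    hence "p (Suc k) = J *v psi A c T (p k)" by (simp add: p_def)
    with 1 show ?thesis by blast
  qed
  have "p k = ((\<lambda>v. J *v psi A c T v) ^^ k) (x 0)" for k
  proof (induction k)
    case 0 show ?case by (simp add: p_def)
  next
    case (Suc k)
    have "p (Suc k) = J *v psi A c T (p k)" using step by blast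
    thus ?case using Suc by simp
  qed
  thus ?thesis using step[of k] by simp
qed



lemma sos_nonneg: "sos_poly p \<Longrightarrow> 0 \<le> poly p x"
proof -
  assume "sos_poly p"
  then obtain qs where p: "p = (\<Sum>q\<leftarrow>qs. q ^ 2)" unfolding sos_poly_def by blast
  have "0 \<le> poly (\<Sum>q\<leftarrow>qs. q ^ 2) x" by (induction qs) auto
  thus ?thesis using p by simp
qed

lemma lyap:
  fixes \<zeta> :: "real poly ^ 'n" and P :: "real \<Rightarrow> real ^ 'n" and A :: "real^'n^'n"
  assumes T: "T \<ge> 0"
    and neg: "\<forall>\<tau>\<in>{0..T}. \<forall>j. (\<Sum>i\<in>UNIV. poly (\<zeta> $ i) \<tau> * A $ i $ j) - poly (pderiv (\<zeta> $ j)) \<tau> \<le> 0"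
    and nn: "\<forall>s\<in>{0..T}. \<forall>j. 0 \<le> P s $ j"
    and der: "\<And>s j. ((\<lambda>s. P s $ j) has_real_derivative (A *v P s) $ j) (at s)"
  shows "(\<Sum>j\<in>UNIV. poly (\<zeta> $ j) 0 * P T $ j) \<le> (\<Sum>j\<in>UNIV. poly (\<zeta> $ j) T * P 0 $ j)"
proof -
  define V where "V s = (\<Sum>j\<in>UNIV. poly (\<zeta> $ j) (T - s) * P s $ j)" for s
  have dz: "((\<lambda>s. poly (\<zeta> $ j) (T - s)) has_real_derivative (- poly (pderiv (\<zeta> $ j)) (T - s))) (at s)" for j s
  proof -
    have "((\<lambda>s. T - s) has_real_derivative -1) (at s)" by (auto intro!: derivative_eq_intros)
    from DERIV_chain2[OF poly_DERIV this] show ?thesis by simp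
  qed
  have dV: "(V has_real_derivative (\<Sum>j\<in>UNIV. (- poly (pderiv (\<zeta> $ j)) (T - s)) * P s $ j
            + (A *v P s) $ j * poly (\<zeta> $ j) (T - s))) (at s)" for s
    unfolding V_def by (rule DERIV_sum, rule DERIV_mult[OF dz der])
  have val: "(\<Sum>j\<in>UNIV. (- poly (pderiv (\<zeta> $ j)) (T - s)) * P s $ j + (A *v P s) $ j * poly (\<zeta> $ j) (T - s))
      = (\<Sum>l\<in>UNIV. P s $ l * ((\<Sum>j\<in>UNIV. poly (\<zeta> $ j) (T - s) * A $ j $ l) - poly (pderiv (\<zeta> $ l)) (T - s)))" for s
  proof -
    have "(\<Sum>j\<in>UNIV. (A *v P s) $ j * poly (\<zeta> $ j) (T - s))
        = (\<Sum>j\<in>UNIV. \<Sum>l\<in>UNIV. A $ j $ l * P s $ l * poly (\<zeta> $ j) (T - s))"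
      by (simp add: matrix_vector_mult_def sum_distrib_right)
    also have "\<dots> = (\<Sum>l\<in>UNIV. \<Sum>j\<in>UNIV. A $ j $ l * P s $ l * poly (\<zeta> $ j) (T - s))"
      by (rule sum.swap)
    also have "\<dots> = (\<Sum>l\<in>UNIV. P s $ l * (\<Sum>j\<in>UNIV. poly (\<zeta> $ j) (T - s) * A $ j $ l))"
      by (simp add: sum_distrib_left mult_ac)
    finally show ?thesis
      by (simp add: sum.distrib right_diff_distrib sum_subtractf mult_ac)
  qed
  have "V T \<le> V 0"
  proof (rule nonincr_within[OF T])
    fix s assume s: "s \<in> {0..T}"
    show "(V has_real_derivative (\<Sum>j\<in>UNIV. (- poly (pderiv (\<zeta> $ j)) (T - s)) * P s $ j
            + (A *v P s) $ j * poly (\<zeta> $ j) (T - s))) (at s within {0..T})"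
      by (rule has_field_derivative_at_within[OF dV])
    have "T - s \<in> {0..T}" using s by auto
    hence "P s $ l * ((\<Sum>j\<in>UNIV. poly (\<zeta> $ j) (T - s) * A $ j $ l) - poly (pderiv (\<zeta> $ l)) (T - s)) \<le> 0" for l
      using neg nn s by (intro mult_nonneg_nonpos) auto
    hence "(\<Sum>l\<in>UNIV. P s $ l * ((\<Sum>j\<in>UNIV. poly (\<zeta> $ j) (T - s) * A $ j $ l) - poly (pderiv (\<zeta> $ l)) (T - s))) \<le> 0"
      by (intro sum_nonpos) auto
    thus "(\<Sum>j\<in>UNIV. (- poly (pderiv (\<zeta> $ j)) (T - s)) * P s $ j
            + (A *v P s) $ j * poly (\<zeta> $ j) (T - s)) \<le> 0" using val by simp
  qed
  thus ?thesis by (simp add: V_def)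
qed

lemma find_k:
  fixes t T :: real
  assumes t: "t > 0" and T: "T > 0"
  shows "\<exists>k::nat. real k * T < t \<and> t \<le> real (Suc k) * T"
proof -
  define m where "m = \<lceil>t / T\<rceil>"
  have c1: "real_of_int m - 1 < t / T" and c2: "t / T \<le> real_of_int m"
    using ceiling_correct[of "t / T"] unfolding m_def by auto
  have "t / T > 0" using t T by simp
  hence "real_of_int m > 0" using c2 by linarith
  hence m1: "m \<ge> 1" by simp
  define k where "k = nat (m - 1)"
  have rk: "real k = real_of_int m - 1" using m1 by (simp add: k_def)
  have "real k * T < t" using c1 T unfolding rk by (simp add: pos_less_divide_eq)
  moreover have "t \<le> real (Suc k) * T" using c2 T rk by (simp add: pos_divide_le_eq algebra_simps)
  ultimately show ?thesis by blast
qed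



theorem proposition6:
  fixes A J :: "real ^ 'n ^ 'n"
    and Tb :: real and ds :: nat and \<epsilon>1 \<epsilon>2 :: real
    and \<zeta> \<gamma> :: "real poly ^ 'n"
  assumes "metzler A" and "nonneg_mat J" and "Tb > 0" and "\<epsilon>1 > 0" and "\<epsilon>2 > 0"
    and "\<forall>i. degree (\<zeta> $ i) \<le> 2 * ds" and "\<forall>i. degree (\<gamma> $ i) \<le> 2 * ds"
    and "csos \<gamma>"
    and "\<forall>i. poly (\<zeta> $ i) Tb - \<epsilon>2 \<ge> 0"
    and "csos (\<chi> j. - (\<Sum>i\<in>UNIV. smult (A $ i $ j) (\<zeta> $ i)) + pderiv (\<zeta> $ j)
                      - [:0, Tb, -1:] * (\<gamma> $ j))"
    and "\<forall>j. - (\<Sum>i\<in>UNIV. poly (\<zeta> $ i) Tb * J $ i $ j) + poly (\<zeta> $ j) 0 - \<epsilon>1 \<ge> 0"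
  shows "(\<forall>i. poly (\<zeta> $ i) Tb > 0)
    \<and> (\<forall>\<tau>\<in>{0..Tb}. \<forall>j. (\<Sum>i\<in>UNIV. poly (\<zeta> $ i) \<tau> * A $ i $ j) - poly (pderiv (\<zeta> $ j)) \<tau> \<le> 0)
    \<and> (\<forall>j. (\<Sum>i\<in>UNIV. poly (\<zeta> $ i) Tb * J $ i $ j) - poly (\<zeta> $ j) 0 + \<epsilon>1 \<le> 0)
    \<and> impulsive_GAS A J Tb"
proof -
  have Tb: "Tb > 0" and e1: "\<epsilon>1 > 0" and e2: "\<epsilon>2 > 0" using assms(3-5) by auto
  have wge: "\<forall>i. poly (\<zeta> $ i) Tb \<ge> \<epsilon>2" using assms(9) by auto
  have c1: "\<forall>i. poly (\<zeta> $ i) Tb > 0" using wge e2 by (meson less_le_trans)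
  have c3: "\<forall>j. (\<Sum>i\<in>UNIV. poly (\<zeta> $ i) Tb * J $ i $ j) - poly (\<zeta> $ j) 0 + \<epsilon>1 \<le> 0"
    using assms(11) by (auto simp: algebra_simps)
  have c2: "\<forall>\<tau>\<in>{0..Tb}. \<forall>j. (\<Sum>i\<in>UNIV. poly (\<zeta> $ i) \<tau> * A $ i $ j) - poly (pderiv (\<zeta> $ j)) \<tau> \<le> 0"
  proof (intro ballI allI)
    fix \<tau> j assume \<tau>: "\<tau> \<in> {0..Tb}"
    let ?v = "(\<chi> j. - (\<Sum>i\<in>UNIV. smult (A $ i $ j) (\<zeta> $ i)) + pderiv (\<zeta> $ j)
                      - [:0, Tb, -1:] * (\<gamma> $ j))"
    have "0 \<le> poly (?v $ j) \<tau>" using assms(10) sos_nonneg unfolding csos_def by blast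
    moreover have "poly [:0, Tb, -1:] \<tau> = \<tau> * (Tb - \<tau>)" by (simp add: algebra_simps)
    moreover have "poly (\<Sum>i\<in>UNIV. smult (A $ i $ j) (\<zeta> $ i)) \<tau> = (\<Sum>i\<in>UNIV. poly (\<zeta> $ i) \<tau> * A $ i $ j)"
      by (simp add: poly_sum mult_ac)
    ultimately have h: "0 \<le> - (\<Sum>i\<in>UNIV. poly (\<zeta> $ i) \<tau> * A $ i $ j) + poly (pderiv (\<zeta> $ j)) \<tau>
        - \<tau> * (Tb - \<tau>) * poly (\<gamma> $ j) \<tau>"
      by (simp add: algebra_simps)
    have "0 \<le> poly (\<gamma> $ j) \<tau>" using assms(8) sos_nonneg unfolding csos_def by blast
    moreover have "0 \<le> \<tau> * (Tb - \<tau>)" using \<tau> by auto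
    ultimately have "0 \<le> \<tau> * (Tb - \<tau>) * poly (\<gamma> $ j) \<tau>" by simp
    with h show "(\<Sum>i\<in>UNIV. poly (\<zeta> $ i) \<tau> * A $ i $ j) - poly (pderiv (\<zeta> $ j)) \<tau> \<le> 0" by linarith
  qed
  \<comment> \<open>stability\<close>
  define c where "c = (\<Sum>k\<in>UNIV. \<bar>A $ k $ k\<bar>)"
  define P where "P = psi A c"
  have Bnn: "\<forall>i j. 0 \<le> Bsh A c $ i $ j" unfolding c_def by (rule Bsh_nonneg[OF assms(1)])
  have Pnn: "0 \<le> P t z $ i" if "t \<ge> 0" "\<forall>i. 0 \<le> z $ i" for t z i
    unfolding P_def by (rule psi_nonneg[OF Bnn that(2,1)])
  have lyapP: "(\<Sum>j\<in>UNIV. poly (\<zeta> $ j) 0 * P Tb z $ j) \<le> (\<Sum>j\<in>UNIV. poly (\<zeta> $ j) Tb * z $ j)"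
    if z: "\<forall>i. 0 \<le> z $ i" for z
    using lyap[of Tb \<zeta> A "\<lambda>s. P s z"] Tb c2 Pnn[OF _ z] psi_deriv[of A c z] by (auto simp: P_def)
  define Mo where "Mo v = J *v P Tb v" for v
  define w where "w = (\<chi> j. poly (\<zeta> $ j) Tb)"
  have w_ge: "w $ j \<ge> \<epsilon>2" for j using wge by (simp add: w_def)
  have w_nn: "w $ j \<ge> 0" for j using w_ge[of j] e2 by linarith
  have Jnn: "0 \<le> J $ i $ j" for i j using assms(2) by (simp add: nonneg_mat_def)
  have z0ge: "poly (\<zeta> $ j) 0 \<ge> \<epsilon>1" for j
  proof -
    have "0 \<le> (\<Sum>i\<in>UNIV. poly (\<zeta> $ i) Tb * J $ i $ j)"
      using w_nn Jnn by (intro sum_nonneg) (simp add: w_def)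
    moreover have "- (\<Sum>i\<in>UNIV. poly (\<zeta> $ i) Tb * J $ i $ j) + poly (\<zeta> $ j) 0 - \<epsilon>1 \<ge> 0"
      using assms(11) by blast
    ultimately show ?thesis by linarith
  qed
  define Z where "Z = (\<Sum>j\<in>UNIV. poly (\<zeta> $ j) 0)"
  have Zge: "poly (\<zeta> $ j) 0 \<le> Z" for j
    unfolding Z_def by (rule member_le_sum) (use z0ge e1 in \<open>auto intro: order_trans[OF less_imp_le]\<close>)
  have Zpos: "Z \<ge> \<epsilon>1" using Zge z0ge by (meson order_trans)
  hence Zp: "Z > 0" using e1 by linarith
  define \<rho> where "\<rho> = 1 - \<epsilon>1 / Z"
  have \<rho>0: "0 \<le> \<rho>" using Zpos Zp by (simp add: \<rho>_def)
  have \<rho>1: "\<rho> < 1" using e1 Zp by (simp add: \<rho>_def)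
  have contr: "(\<forall>i. 0 \<le> Mo z $ i) \<and> (\<Sum>j\<in>UNIV. w $ j * Mo z $ j) \<le> \<rho> * (\<Sum>j\<in>UNIV. w $ j * z $ j)"
    if z: "\<forall>i. 0 \<le> z $ i" for z
  proof -
    define y where "y = P Tb z"
    have ynn: "0 \<le> y $ i" for i unfolding y_def using Pnn z Tb by auto
    have nn1: "0 \<le> Mo z $ i" for i
      unfolding Mo_def y_def[symmetric] matrix_vector_mult_def using ynn Jnn by (auto intro!: sum_nonneg)
    have "(\<Sum>j\<in>UNIV. w $ j * Mo z $ j) = (\<Sum>j\<in>UNIV. \<Sum>l\<in>UNIV. w $ j * J $ j $ l * y $ l)"
      unfolding Mo_def y_def[symmetric] matrix_vector_mult_def by (simp add: sum_distrib_left mult_ac)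
    also have "\<dots> = (\<Sum>l\<in>UNIV. y $ l * (\<Sum>j\<in>UNIV. poly (\<zeta> $ j) Tb * J $ j $ l))"
      by (subst sum.swap) (simp add: sum_distrib_left w_def mult_ac)
    also have "\<dots> \<le> (\<Sum>l\<in>UNIV. y $ l * (\<rho> * poly (\<zeta> $ l) 0))"
    proof (intro sum_mono mult_left_mono ynn)
      fix l
      have "(\<Sum>j\<in>UNIV. poly (\<zeta> $ j) Tb * J $ j $ l) \<le> poly (\<zeta> $ l) 0 - \<epsilon>1" using c3[rule_format, of l] by linarith
      moreover have "\<epsilon>1 * poly (\<zeta> $ l) 0 / Z \<le> \<epsilon>1"
        using Zge[of l] Zp e1 by (simp add: pos_divide_le_eq)
      ultimately show "(\<Sum>j\<in>UNIV. poly (\<zeta> $ j) Tb * J $ j $ l) \<le> \<rho> * poly (\<zeta> $ l) 0"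
        by (simp add: \<rho>_def algebra_simps)
    qed
    also have "\<dots> = \<rho> * (\<Sum>j\<in>UNIV. poly (\<zeta> $ j) 0 * P Tb z $ j)"
      by (simp add: sum_distrib_left y_def mult_ac)
    also have "\<dots> \<le> \<rho> * (\<Sum>j\<in>UNIV. w $ j * z $ j)"
      using lyapP[OF z] \<rho>0 by (intro mult_left_mono) (auto simp: w_def)
    finally have ch: "(\<Sum>j\<in>UNIV. w $ j * Mo z $ j) \<le> \<rho> * (\<Sum>j\<in>UNIV. w $ j * z $ j)" .
    show ?thesis using nn1 ch by blast
  qed

  have iter: "(\<forall>i. 0 \<le> (Mo ^^ k) z $ i) \<and> (\<Sum>j\<in>UNIV. w $ j * (Mo ^^ k) z $ j) \<le> \<rho> ^ k * (\<Sum>j\<in>UNIV. w $ j * z $ j)"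
    if z: "\<forall>i. 0 \<le> z $ i" for k z
  proof (induction k)
    case 0 show ?case using z by simp
  next
    case (Suc k)
    have a: "\<forall>i. 0 \<le> (Mo ^^ k) z $ i" using Suc by blast
    have "(\<Sum>j\<in>UNIV. w $ j * Mo ((Mo ^^ k) z) $ j) \<le> \<rho> * (\<Sum>j\<in>UNIV. w $ j * (Mo ^^ k) z $ j)"
      using contr[OF a] by blast
    also have "\<dots> \<le> \<rho> * (\<rho> ^ k * (\<Sum>j\<in>UNIV. w $ j * z $ j))"
      using Suc \<rho>0 by (intro mult_left_mono) auto
    finally show ?case using contr[OF a] by (simp add: mult_ac)
  qed
  have Mo_diff: "Mo (a - b) = Mo a - Mo b" for a b
    by (simp add: Mo_def P_def psi_diff matrix_vector_mult_diff_distrib)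
  have Mok_diff: "(Mo ^^ k) (a - b) = (Mo ^^ k) a - (Mo ^^ k) b" for k a b
    by (induction k) (simp_all add: Mo_diff)
  have nn_norm: "norm v \<le> (\<Sum>j\<in>UNIV. w $ j * v $ j) / \<epsilon>2" if v: "\<forall>i. 0 \<le> v $ i" for v
  proof -
    have "norm v \<le> (\<Sum>i\<in>UNIV. \<bar>v $ i\<bar>)" by (rule norm_le_l1_cart)
    also have "\<dots> = (\<Sum>i\<in>UNIV. v $ i)" using v by simp
    also have "\<dots> \<le> (\<Sum>j\<in>UNIV. w $ j * v $ j) / \<epsilon>2"
    proof -
      have "\<epsilon>2 * (\<Sum>i\<in>UNIV. v $ i) = (\<Sum>i\<in>UNIV. \<epsilon>2 * v $ i)" by (simp add: sum_distrib_left)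
      also have "\<dots> \<le> (\<Sum>j\<in>UNIV. w $ j * v $ j)"
        using v w_ge by (intro sum_mono mult_right_mono) auto
      finally show ?thesis using e2 by (simp add: pos_le_divide_eq mult.commute)
    qed
    finally show ?thesis .
  qed
  define W where "W = (\<Sum>j\<in>UNIV. w $ j)"
  have W0: "W \<ge> 0" unfolding W_def using w_nn by (simp add: sum_nonneg)
  have part_bound: "(\<Sum>j\<in>UNIV. w $ j * u $ j) \<le> W * norm x"
    if "\<forall>i. \<bar>u $ i\<bar> \<le> \<bar>x $ i\<bar>" for u x :: "real^'n"
  proof -
    have "(\<Sum>j\<in>UNIV. w $ j * u $ j) \<le> (\<Sum>j\<in>UNIV. w $ j * norm x)"
    proof (intro sum_mono mult_left_mono w_nn)
      fix j show "u $ j \<le> norm x"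
        using that component_le_norm_cart[of x j] by (meson abs_ge_self order_trans)
    qed
    thus ?thesis by (simp add: W_def sum_distrib_right)
  qed
  have Mk_bound: "norm ((Mo ^^ k) x) \<le> 2 * W / \<epsilon>2 * \<rho> ^ k * norm x" for k x
  proof -
    define xp where "xp = (\<chi> i. max (x $ i) 0)"
    define xn where "xn = (\<chi> i. max (- x $ i) 0)"
    have xpn: "x = xp - xn" by (simp add: xp_def xn_def vec_eq_iff max_def)
    have pnn: "\<forall>i. 0 \<le> xp $ i" "\<forall>i. 0 \<le> xn $ i" by (simp_all add: xp_def xn_def)
    have one: "norm ((Mo ^^ k) u) \<le> W / \<epsilon>2 * \<rho> ^ k * norm x"
      if u: "\<forall>i. 0 \<le> u $ i" "\<forall>i. \<bar>u $ i\<bar> \<le> \<bar>x $ i\<bar>" for u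
    proof -
      have "norm ((Mo ^^ k) u) \<le> (\<Sum>j\<in>UNIV. w $ j * (Mo ^^ k) u $ j) / \<epsilon>2"
        using nn_norm iter[OF u(1)] by blast
      also have "\<dots> \<le> \<rho> ^ k * (\<Sum>j\<in>UNIV. w $ j * u $ j) / \<epsilon>2"
        using iter[OF u(1)] e2 by (intro divide_right_mono) auto
      also have "\<dots> \<le> \<rho> ^ k * (W * norm x) / \<epsilon>2"
        using part_bound[OF u(2)] \<rho>0 e2 by (intro divide_right_mono mult_left_mono) auto
      finally show ?thesis by (simp add: mult_ac)
    qed
    have "norm ((Mo ^^ k) x) \<le> norm ((Mo ^^ k) xp) + norm ((Mo ^^ k) xn)"
      unfolding xpn Mok_diff by (rule norm_triangle_ineq4)
    also have "\<dots> \<le> W / \<epsilon>2 * \<rho> ^ k * norm x + W / \<epsilon>2 * \<rho> ^ k * norm x"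
      by (intro add_mono one) (auto simp: xp_def xn_def pnn)
    finally show ?thesis by (simp add: mult_ac)
  qed
  obtain C where C: "C > 0" "\<forall>t\<in>{0..Tb}. \<forall>x. norm (P t x) \<le> C * norm x"
    using psi_bound[of Tb A c] Tb unfolding P_def by auto
  define D where "D = C * (2 * W / \<epsilon>2)"
  have D0: "D \<ge> 0" using C W0 e2 by (simp add: D_def)
  have xbound: "\<exists>k. real k * Tb < t \<and> t \<le> real (Suc k) * Tb \<and> norm (x t) \<le> D * \<rho> ^ k * norm (x 0)"
    if sol: "impulsive_solution A J Tb x" and t: "t > 0" for x t
  proof -
    obtain k where k: "real k * Tb < t" "t \<le> real (Suc k) * Tb" using find_k[OF t Tb] by blast
    have Moeq: "(\<lambda>v. J *v psi A c Tb v) = Mo" by (simp add: Mo_def P_def fun_eq_iff)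
    have "x t = P (t - real k * Tb) ((Mo ^^ k) (x 0))"
      using sol_struct[OF sol Tb, of k c] k unfolding Moeq by (auto simp: P_def)
    moreover have "t - real k * Tb \<in> {0..Tb}" using k by (auto simp: algebra_simps)
    ultimately have "norm (x t) \<le> C * norm ((Mo ^^ k) (x 0))" using C by auto
    also have "\<dots> \<le> C * (2 * W / \<epsilon>2 * \<rho> ^ k * norm (x 0))"
      using C Mk_bound by (intro mult_left_mono) auto
    finally show ?thesis using k by (auto simp: D_def mult_ac)
  qed
  define D1 where "D1 = max 1 D"
  have D1: "D1 \<ge> 1" "D1 > 0" by (auto simp: D1_def)
  have allbound: "norm (x t) \<le> D1 * norm (x 0)"
    if sol: "impulsive_solution A J Tb x" and t: "t \<ge> 0" for x t
  proof (cases "t = 0")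
    case True
    have "1 * norm (x 0) \<le> D1 * norm (x 0)" by (rule mult_right_mono) (use D1 in auto)
    thus ?thesis using True by simp
  next
    case False
    hence "t > 0" using t by simp
    then obtain k where "norm (x t) \<le> D * \<rho> ^ k * norm (x 0)" using xbound[OF sol] by blast
    also have "\<dots> \<le> D * 1 * norm (x 0)"
      using \<rho>0 \<rho>1 D0 by (intro mult_right_mono mult_left_mono power_le_one) auto
    also have "\<dots> \<le> D1 * norm (x 0)" by (intro mult_right_mono) (auto simp: D1_def)
    finally show ?thesis .
  qed
  have gas1: "\<forall>e>0. \<exists>d>0. \<forall>x. impulsive_solution A J Tb x \<and> norm (x 0) < d \<longrightarrow>
          (\<forall>t\<ge>0. norm (x t) < e)"
  proof (intro allI impI)
    fix e :: real assume e: "e > 0"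
    show "\<exists>d>0. \<forall>x. impulsive_solution A J Tb x \<and> norm (x 0) < d \<longrightarrow> (\<forall>t\<ge>0. norm (x t) < e)"
    proof (intro exI[of _ "e / D1"] conjI allI impI)
      show "e / D1 > 0" using e D1 by simp
      fix x and t :: real assume h: "impulsive_solution A J Tb x \<and> norm (x 0) < e / D1" and t: "0 \<le> t"
      have "norm (x t) \<le> D1 * norm (x 0)" using allbound h t by blast
      also have "\<dots> < D1 * (e / D1)" using h D1 by (intro mult_strict_left_mono) auto
      finally show "norm (x t) < e" using D1 by simp
    qed
  qed
  have gas2: "\<forall>x. impulsive_solution A J Tb x \<longrightarrow> (x \<longlongrightarrow> 0) at_top"
  proof (intro allI impI)
    fix x assume sol: "impulsive_solution A J Tb x"
    define a where "a = D * norm (x 0)"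
    have a0: "a \<ge> 0" using D0 by (simp add: a_def)
    show "(x \<longlongrightarrow> 0) at_top"
    proof (rule tendstoI)
      fix e :: real assume e: "e > 0"
      obtain N where N: "\<rho> ^ N < e / (a + 1)" using real_arch_pow_inv[OF _ \<rho>1, of "e / (a + 1)"] e a0 by auto
      have "eventually (\<lambda>t. t > real N * Tb) at_top" by (rule eventually_gt_at_top)
      thus "eventually (\<lambda>t. dist (x t) 0 < e) at_top"
      proof (rule eventually_mono)
        fix t assume tN: "t > real N * Tb"
        have t0: "t > 0" using tN Tb by (smt (verit) mult_nonneg_nonneg of_nat_0_le_iff)
        obtain k where k: "real k * Tb < t" "t \<le> real (Suc k) * Tb" "norm (x t) \<le> D * \<rho> ^ k * norm (x 0)"
          using xbound[OF sol t0] by blast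
        have "real N * Tb < real (Suc k) * Tb" using tN k by linarith
        hence "N < Suc k" using Tb by (simp add: mult_less_cancel_right)
        hence "\<rho> ^ k \<le> \<rho> ^ N" using \<rho>0 \<rho>1 by (intro power_decreasing) auto
        hence "D * norm (x 0) * \<rho> ^ k \<le> D * norm (x 0) * \<rho> ^ N" using D0 by (intro mult_left_mono) auto
        hence "norm (x t) \<le> a * \<rho> ^ N" using k(3) by (simp add: a_def mult_ac)
        also have "\<dots> \<le> a * (e / (a + 1))" using N a0 by (intro mult_left_mono) auto
        also have "\<dots> < e" using a0 e by (simp add: field_simps)
        finally show "dist (x t) 0 < e" by simp
      qed
    qed
  qed
  show ?thesis using c1 c2 c3 gas1 gas2 by (simp add: impulsive_GAS_def)
qed

end
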